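(* Let $n\ge2$, let $v\in C^0(\mathbb R^n)$ be quasi-concave, and suppose $v\in C^\infty(U)$ for some domain $U\subset\mathbb R^n$. Then on the open set $\{x\in U: Dv(x)\neq0\}$, $$\mathrm{div}\Big(|Dv|^{-2}\big(\Delta v\,Dv-D^2v\,Dv\big)\Big)\ge0 .$$
   Context: A function $f\in C^0(\mathbb R^n)$ is quasi-concave if $f(\lambda x+(1-\lambda)y)\ge\min\{f(x),f(y)\}$ for all $x,y\in\mathbb R^n$, $\lambda\in[0,1]$; equivalently, every nonempty super level set $\{f>t\}$ is convex. *)

theory Defs
  imports "HOL-Analysis.Analysis"
begin

definition quasi_concave :: "(real^'n \<Rightarrow> real) \<Rightarrow> bool" where
  "quasi_concave f \<longleftrightarrow>
     (\<forall>x y. \<forall>l::real. 0 \<le> l \<and> l \<le> 1 \<longrightarrow> f (l *\<^sub>R x + (1 - l) *\<^sub>R y) \<ge> min (f x) (f y))"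

definition pd :: "'n::finite \<Rightarrow> (real^'n \<Rightarrow> real) \<Rightarrow> real^'n \<Rightarrow> real" where
  "pd i f x = deriv (\<lambda>t. f (x + t *\<^sub>R axis i 1)) 0"

fun iter_pd :: "'n::finite list \<Rightarrow> (real^'n \<Rightarrow> real) \<Rightarrow> real^'n \<Rightarrow> real" where
  "iter_pd [] f = f"
| "iter_pd (i # is) f = pd i (iter_pd is f)"

definition smooth_on :: "(real^'n::finite) set \<Rightarrow> (real^'n \<Rightarrow> real) \<Rightarrow> bool" where
  "smooth_on U f \<longleftrightarrow>
     (\<forall>is. continuous_on U (iter_pd is f) \<and>
        (\<forall>x\<in>U. \<forall>i. ((\<lambda>t. iter_pd is f (x + t *\<^sub>R axis i 1))
                       has_real_derivative pd i (iter_pd is f) x) (at 0)))"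

definition grad :: "(real^'n::finite \<Rightarrow> real) \<Rightarrow> real^'n \<Rightarrow> real^'n" where
  "grad f x = (\<chi> i. pd i f x)"

definition hessian :: "(real^'n::finite \<Rightarrow> real) \<Rightarrow> real^'n \<Rightarrow> real^'n^'n" where
  "hessian f x = (\<chi> i j. pd i (pd j f) x)"

definition laplacian :: "(real^'n::finite \<Rightarrow> real) \<Rightarrow> real^'n \<Rightarrow> real" where
  "laplacian f x = (\<Sum>i\<in>UNIV. pd i (pd i f) x)"

definition divergence :: "(real^'n::finite \<Rightarrow> real^'n) \<Rightarrow> real^'n \<Rightarrow> real" where
  "divergence F x = (\<Sum>i\<in>UNIV. pd i (\<lambda>y. F y $ i) x)"

end

theory Submission
  imports Defs
begin


lemma sm_deriv:
  assumes "smooth_on U v" "y \<in> U"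
  shows "((\<lambda>t. iter_pd is v (y + t *\<^sub>R axis i 1)) has_real_derivative pd i (iter_pd is v) y) (at 0)"
  using assms unfolding smooth_on_def by blast

lemma sm_cont:
  assumes "smooth_on U v"
  shows "continuous_on U (iter_pd is v)"
  using assms unfolding smooth_on_def by blast

lemma dir_deriv:
  fixes G :: "real^'n \<Rightarrow> real"
  assumes "\<And>y. y \<in> U \<Longrightarrow> ((\<lambda>u. G (y + u *\<^sub>R e)) has_real_derivative D y) (at 0)"
  and "p + s *\<^sub>R e \<in> U"
  shows "((\<lambda>s. G (p + s *\<^sub>R e)) has_real_derivative D (p + s *\<^sub>R e)) (at s)"
proof -
  have "((\<lambda>u. G ((p + s *\<^sub>R e) + u *\<^sub>R e)) has_real_derivative D (p + s *\<^sub>R e)) (at 0)"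
    using assms by blast
  moreover have "(\<lambda>u. G ((p + s *\<^sub>R e) + u *\<^sub>R e)) = (\<lambda>u. G (p + (u + s) *\<^sub>R e))"
    by (simp add: algebra_simps scaleR_add_left)
  ultimately show ?thesis using DERIV_shift[of "\<lambda>s. G (p + s *\<^sub>R e)" _ 0 s] by simp
qed

lemma mv_bound:
  fixes f f' :: "real \<Rightarrow> real"
  assumes "\<And>s. min 0 b \<le> s \<Longrightarrow> s \<le> max 0 b \<Longrightarrow> (f has_real_derivative f' s) (at s)"
  and "\<And>s. min 0 b \<le> s \<Longrightarrow> s \<le> max 0 b \<Longrightarrow> \<bar>f' s - c\<bar> \<le> e"
  shows "\<bar>f b - f 0 - c * b\<bar> \<le> e * \<bar>b\<bar>"
proof (cases "b = 0")
  case True then show ?thesis by simp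
next
  case False
  define g where "g s = f s - c * s" for s
  have dg: "(g has_real_derivative (f' s - c)) (at s)" if "min 0 b \<le> s" "s \<le> max 0 b" for s
    unfolding g_def using assms(1)[OF that] by (auto intro!: derivative_eq_intros)
  show ?thesis
  proof (cases "b > 0")
    case True
    obtain z where z: "0 < z" "z < b" "g b - g 0 = (b - 0) * (f' z - c)"
      using MVT2[of 0 b g "\<lambda>s. f' s - c"] dg True by auto
    have "\<bar>f' z - c\<bar> \<le> e" using assms(2)[of z] z True by auto
    moreover have "\<bar>f b - f 0 - c * b\<bar> = b * \<bar>f' z - c\<bar>"
    proof -
      have "f b - f 0 - c * b = b * (f' z - c)" using z by (simp add: g_def algebra_simps)
      then show ?thesis using True by (simp add: abs_mult)
    qed
    ultimately show ?thesis using True by (simp add: mult_left_mono mult.commute)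
  next
    case False
    then have b: "b < 0" using \<open>b \<noteq> 0\<close> by auto
    obtain z where z: "b < z" "z < 0" "g 0 - g b = (0 - b) * (f' z - c)"
      using MVT2[of b 0 g "\<lambda>s. f' s - c"] dg b by auto
    have "\<bar>f' z - c\<bar> \<le> e" using assms(2)[of z] z b by auto
    moreover have "\<bar>f b - f 0 - c * b\<bar> = (- b) * \<bar>f' z - c\<bar>"
    proof -
      have "f b - f 0 - c * b = b * (f' z - c)" using z by (simp add: g_def algebra_simps)
      then show ?thesis using b by (simp add: abs_mult)
    qed
    ultimately show ?thesis using b by (simp add: mult_left_mono mult.commute)
  qed
qed



lemma comp_sum_axis:
  fixes h :: "real^'n"
  shows "(\<Sum>i\<in>S. h$i *\<^sub>R axis i (1::real)) $ k = (if k \<in> S \<and> finite S then h$k else 0)"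
proof (cases "finite S")
  case True
  have "(\<Sum>i\<in>S. h$i *\<^sub>R axis i (1::real)) $ k = (\<Sum>i\<in>S. h$i * (if k = i then 1 else 0))"
    by (simp add: axis_def)
  also have "\<dots> = (\<Sum>i\<in>S. (if k = i then h$k else 0))"
    by (rule sum.cong) auto
  also have "\<dots> = (if k \<in> S then h$k else 0)" using True by (simp add: sum.delta)
  finally show ?thesis using True by simp
qed simp

lemma sum_axis_vec: "(\<Sum>i\<in>UNIV. (h$i) *\<^sub>R axis i (1::real)) = (h::real^'n)"
proof (rule iffD2[OF vec_eq_iff], rule allI)
  fix k
  show "(\<Sum>i\<in>UNIV. (h$i) *\<^sub>R axis i (1::real)) $ k = h $ k"
    by (subst comp_sum_axis) simp
qed

lemma telescope:
  fixes F :: "real^'n \<Rightarrow> real" and h :: "real^'n"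
  assumes der: "\<And>y i. y \<in> U \<Longrightarrow> ((\<lambda>u. F (y + u *\<^sub>R axis i 1)) has_real_derivative D i y) (at 0)"
   and bal: "\<And>y. norm (y - z) \<le> norm h \<Longrightarrow> y \<in> U \<and> (\<forall>i. \<bar>D i y - D i z\<bar> \<le> e)"
   and fin: "finite S"
  shows "\<bar>F (z + (\<Sum>i\<in>S. h$i *\<^sub>R axis i 1)) - F z - (\<Sum>i\<in>S. D i z * h$i)\<bar> \<le> e * (\<Sum>i\<in>S. \<bar>h$i\<bar>)"
  using fin
proof induct
  case empty
  then show ?case by simp
next
  case (insert a S)
  define p where "p = z + (\<Sum>i\<in>S. h$i *\<^sub>R axis i 1)"
  have pts: "norm ((p + s *\<^sub>R axis a 1) - z) \<le> norm h" if "\<bar>s\<bar> \<le> \<bar>h$a\<bar>" for s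
  proof (rule norm_le_componentwise_cart)
    fix k
    show "norm ((p + s *\<^sub>R axis a 1 - z) $ k) \<le> norm (h $ k)"
      using that insert(1,2) comp_sum_axis[of h S k] by (auto simp: p_def axis_def)
  qed
  have mv: "\<bar>(\<lambda>s. F (p + s *\<^sub>R axis a 1)) (h$a) - (\<lambda>s. F (p + s *\<^sub>R axis a 1)) 0 - D a z * h$a\<bar> \<le> e * \<bar>h$a\<bar>"
  proof (rule mv_bound[where f' = "\<lambda>s. D a (p + s *\<^sub>R axis a 1)"])
    fix s assume s: "min 0 (h$a) \<le> s" "s \<le> max 0 (h$a)"
    then have "\<bar>s\<bar> \<le> \<bar>h$a\<bar>" by auto
    from bal[OF pts[OF this]] have U: "p + s *\<^sub>R axis a 1 \<in> U" and b: "\<bar>D a (p + s *\<^sub>R axis a 1) - D a z\<bar> \<le> e"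
      by auto
    show "((\<lambda>s. F (p + s *\<^sub>R axis a 1)) has_real_derivative D a (p + s *\<^sub>R axis a 1)) (at s)"
      by (rule dir_deriv[OF der U]) 
    show "\<bar>D a (p + s *\<^sub>R axis a 1) - D a z\<bar> \<le> e" by (rule b)
  qed
  have eq: "z + (\<Sum>i\<in>insert a S. h$i *\<^sub>R axis i 1) = p + h$a *\<^sub>R axis a 1"
    using insert by (simp add: p_def algebra_simps)
  have "\<bar>F (p + h$a *\<^sub>R axis a 1) - F z - (\<Sum>i\<in>insert a S. D i z * h$i)\<bar>
      \<le> \<bar>F (p + h$a *\<^sub>R axis a 1) - F p - D a z * h$a\<bar> + \<bar>F p - F z - (\<Sum>i\<in>S. D i z * h$i)\<bar>"
    using insert by simp
  also have "\<dots> \<le> e * \<bar>h$a\<bar> + e * (\<Sum>i\<in>S. \<bar>h$i\<bar>)"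
    using mv insert(3) unfolding p_def by simp
  finally have X: "\<bar>F (p + h$a *\<^sub>R axis a 1) - F z - (\<Sum>i\<in>insert a S. D i z * h$i)\<bar>
      \<le> e * \<bar>h$a\<bar> + e * (\<Sum>i\<in>S. \<bar>h$i\<bar>)" .
  show ?case unfolding eq using X by (simp only: sum.insert[OF insert(1,2)] distrib_left)
qed

lemma frechet:
  fixes F :: "real^'n \<Rightarrow> real"
  assumes der: "\<And>y i. y \<in> U \<Longrightarrow> ((\<lambda>u. F (y + u *\<^sub>R axis i 1)) has_real_derivative D i y) (at 0)"
  and cont: "\<And>i. continuous_on U (D i)" and U: "open U" and z: "z \<in> U"
  shows "(F has_derivative (\<lambda>h. \<Sum>i\<in>UNIV. D i z * h$i)) (at z)"
proof -
  have lin: "bounded_linear (\<lambda>h::real^'n. \<Sum>i\<in>UNIV. D i z * h$i)"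
    unfolding linear_conv_bounded_linear[symmetric]
    by (rule linearI) (auto simp: sum.distrib distrib_left sum_distrib_left algebra_simps)
  show ?thesis unfolding has_derivative_at_alt
  proof (intro conjI lin allI impI)
    fix e :: real assume e: "e > 0"
    define e' where "e' = e / real CARD('n)"
    have e': "e' > 0" using e by (simp add: e'_def)
    have "\<forall>\<^sub>F y in nhds z. \<forall>i. \<bar>D i y - D i z\<bar> \<le> e'"
    proof (rule eventually_all_finite)
      fix i
      have "isCont (D i) z" using cont U z continuous_on_eq_continuous_at by blast
      then obtain d where "d > 0" "\<forall>y. dist y z < d \<longrightarrow> dist (D i y) (D i z) < e'"
        using e' unfolding continuous_at_eps_delta by blast
      then show "\<forall>\<^sub>F y in nhds z. \<bar>D i y - D i z\<bar> \<le> e'"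
        unfolding eventually_nhds_metric by (auto simp: dist_real_def intro!: exI[of _ d])
    qed
    moreover have "\<forall>\<^sub>F y in nhds z. y \<in> U" using eventually_nhds_in_open[OF U z] .
    ultimately have "\<forall>\<^sub>F y in nhds z. y \<in> U \<and> (\<forall>i. \<bar>D i y - D i z\<bar> \<le> e')"
      by eventually_elim auto
    then obtain d where d: "d > 0" "\<And>y. dist y z < d \<Longrightarrow> y \<in> U \<and> (\<forall>i. \<bar>D i y - D i z\<bar> \<le> e')"
      unfolding eventually_nhds_metric by blast
    show "\<exists>d>0. \<forall>y. norm (y - z) < d \<longrightarrow>
        norm (F y - F z - (\<Sum>i\<in>UNIV. D i z * (y - z) $ i)) \<le> e * norm (y - z)"
    proof (intro exI[of _ d] conjI allI impI d(1))
      fix y assume y: "norm (y - z) < d"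
      define h where "h = y - z"
      have A1: "\<bar>F (z + (\<Sum>i\<in>UNIV. h$i *\<^sub>R axis i 1)) - F z - (\<Sum>i\<in>UNIV. D i z * h$i)\<bar> \<le> e' * (\<Sum>i\<in>UNIV. \<bar>h$i\<bar>)"
      proof (rule telescope[OF der])
        fix y' assume "norm (y' - z) \<le> norm h"
        then have "dist y' z < d" using y by (simp add: h_def dist_norm)
        then show "y' \<in> U \<and> (\<forall>i. \<bar>D i y' - D i z\<bar> \<le> e')" using d(2) by blast
      qed auto
      have A2: "(\<Sum>i\<in>UNIV. \<bar>h$i\<bar>) \<le> real CARD('n) * norm h"
        using sum_bounded_above[of UNIV "\<lambda>i. \<bar>h$i\<bar>" "norm h"] component_le_norm_cart by auto
      have A3: "z + (\<Sum>i\<in>UNIV. h$i *\<^sub>R axis i 1) = y" 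
        proof -
          have "z + (\<Sum>i\<in>UNIV. h$i *\<^sub>R axis i 1) = z + h" by (simp only: sum_axis_vec)
          also have "\<dots> = y" unfolding h_def by simp
          finally show ?thesis .
        qed
      have "\<bar>F y - F z - (\<Sum>i\<in>UNIV. D i z * h$i)\<bar> \<le> e' * (real CARD('n) * norm h)"
      proof -
        have "e' * (\<Sum>i\<in>UNIV. \<bar>h$i\<bar>) \<le> e' * (real CARD('n) * norm h)"
          using A2 e' by (intro mult_left_mono) auto
        then show ?thesis using A1 A3 by simp
      qed
      then show "norm (F y - F z - (\<Sum>i\<in>UNIV. D i z * (y - z) $ i)) \<le> e * norm (y - z)"
        by (simp add: e'_def h_def)
    qed
  qed
qed



lemma smooth_frechet:
  assumes sm: "smooth_on U v" and U: "open U" and z: "z \<in> U"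
  shows "(iter_pd is v has_derivative (\<lambda>h. \<Sum>i\<in>UNIV. pd i (iter_pd is v) z * h$i)) (at z)"
proof (rule frechet[where D="\<lambda>i. pd i (iter_pd is v)", OF _ _ U z])
  show "\<And>y i. y \<in> U \<Longrightarrow> ((\<lambda>u. iter_pd is v (y + u *\<^sub>R axis i 1)) has_real_derivative pd i (iter_pd is v) y) (at 0)"
    using sm_deriv[OF sm] by blast
  show "\<And>i. continuous_on U (pd i (iter_pd is v))"
    using sm_cont[OF sm, of "_ # is"] by simp
qed

lemma route:
  fixes F :: "real^'n \<Rightarrow> real"
  assumes dF: "\<And>y k. y \<in> U \<Longrightarrow> ((\<lambda>u. F (y + u *\<^sub>R axis k 1)) has_real_derivative pd k F y) (at 0)"
   and dG: "\<And>y k. y \<in> U \<Longrightarrow> ((\<lambda>u. pd i F (y + u *\<^sub>R axis k 1)) has_real_derivative pd k (pd i F) y) (at 0)"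
   and t: "t > 0"
   and inU: "\<And>s r. 0 \<le> s \<Longrightarrow> s \<le> t \<Longrightarrow> 0 \<le> r \<Longrightarrow> r \<le> t \<Longrightarrow> z + s *\<^sub>R axis i 1 + r *\<^sub>R axis j 1 \<in> U"
  shows "\<exists>s r. 0 < s \<and> s < t \<and> 0 < r \<and> r < t \<and>
    F (z + t *\<^sub>R axis i 1 + t *\<^sub>R axis j 1) - F (z + t *\<^sub>R axis i 1) - F (z + t *\<^sub>R axis j 1) + F z
      = t\<^sup>2 * pd j (pd i F) (z + s *\<^sub>R axis i 1 + r *\<^sub>R axis j 1)"
proof -
  define ei where "ei = axis i (1::real)"
  define ej where "ej = axis j (1::real)"
  have inU': "z + s *\<^sub>R ei + r *\<^sub>R ej \<in> U" if "0 \<le> s" "s \<le> t" "0 \<le> r" "r \<le> t" for s r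
    using inU[OF that] by (simp add: ei_def ej_def)
  define g where "g s = F ((z + t *\<^sub>R ej) + s *\<^sub>R ei) - F (z + s *\<^sub>R ei)" for s
  have dg: "(g has_real_derivative (pd i F ((z + t *\<^sub>R ej) + s *\<^sub>R ei) - pd i F (z + s *\<^sub>R ei))) (at s)"
    if "0 \<le> s" "s \<le> t" for s
  proof -
    have a: "(z + t *\<^sub>R ej) + s *\<^sub>R ei \<in> U" using inU'[OF that, of t] t
      by (simp add: algebra_simps)
    have b: "z + s *\<^sub>R ei \<in> U" using inU'[OF that, of 0] t by simp
    show ?thesis unfolding g_def ei_def
      by (intro DERIV_diff dir_deriv[where U=U, OF dF]) (use a b in \<open>auto simp: ei_def\<close>)
  qed
  obtain \<sigma> where \<sigma>: "0 < \<sigma>" "\<sigma> < t"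
    "g t - g 0 = (t - 0) * (pd i F ((z + t *\<^sub>R ej) + \<sigma> *\<^sub>R ei) - pd i F (z + \<sigma> *\<^sub>R ei))"
  proof -
    have "\<exists>\<sigma>. 0 < \<sigma> \<and> \<sigma> < t \<and> g t - g 0 = (t - 0) * (pd i F ((z + t *\<^sub>R ej) + \<sigma> *\<^sub>R ei) - pd i F (z + \<sigma> *\<^sub>R ei))"
      by (rule MVT2[OF t, of g "\<lambda>s. pd i F ((z + t *\<^sub>R ej) + s *\<^sub>R ei) - pd i F (z + s *\<^sub>R ei)"]) (rule dg)
    then show ?thesis using that by blast
  qed
  define k where "k r = pd i F ((z + \<sigma> *\<^sub>R ei) + r *\<^sub>R ej)" for r
  have dk: "(k has_real_derivative pd j (pd i F) ((z + \<sigma> *\<^sub>R ei) + r *\<^sub>R ej)) (at r)"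
    if "0 \<le> r" "r \<le> t" for r
  proof -
    have a: "(z + \<sigma> *\<^sub>R ei) + r *\<^sub>R ej \<in> U" using inU'[of \<sigma> r] \<sigma> that by simp
    have a': "(z + \<sigma> *\<^sub>R ei) + r *\<^sub>R axis j 1 \<in> U" using a unfolding ej_def .
    show ?thesis unfolding k_def ej_def
      by (rule dir_deriv[where U=U, OF dG a'])
  qed
  obtain \<rho> where \<rho>: "0 < \<rho>" "\<rho> < t"
    "k t - k 0 = (t - 0) * pd j (pd i F) ((z + \<sigma> *\<^sub>R ei) + \<rho> *\<^sub>R ej)"
  proof -
    have "\<exists>\<rho>. 0 < \<rho> \<and> \<rho> < t \<and> k t - k 0 = (t - 0) * pd j (pd i F) ((z + \<sigma> *\<^sub>R ei) + \<rho> *\<^sub>R ej)"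
      by (rule MVT2[OF t, of k "\<lambda>r. pd j (pd i F) ((z + \<sigma> *\<^sub>R ei) + r *\<^sub>R ej)"]) (rule dk)
    then show ?thesis using that by blast
  qed
  have e1: "(z + t *\<^sub>R ej) + \<sigma> *\<^sub>R ei = (z + \<sigma> *\<^sub>R ei) + t *\<^sub>R ej" by (simp add: algebra_simps)
  have "F (z + t *\<^sub>R ei + t *\<^sub>R ej) - F (z + t *\<^sub>R ei) - F (z + t *\<^sub>R ej) + F z = g t - g 0"
    by (simp add: g_def algebra_simps)
  also have "\<dots> = t * (k t - k 0)" using \<sigma>(3) e1 by (simp add: k_def)
  also have "\<dots> = t\<^sup>2 * pd j (pd i F) (z + \<sigma> *\<^sub>R ei + \<rho> *\<^sub>R ej)"
    using \<rho>(3) by (simp add: power2_eq_square)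
  finally show ?thesis using \<sigma> \<rho> unfolding ei_def ej_def by blast
qed

lemma abs_help: "\<bar>x - b\<bar> < \<bar>a - b\<bar> / 2 \<Longrightarrow> \<bar>y - a\<bar> < \<bar>a - b\<bar> / 2 \<Longrightarrow> (x::real) = y \<Longrightarrow> False"
  unfolding abs_if by (auto split: if_splits)

lemma clairaut:
  assumes sm: "smooth_on U v" and U: "open U" and z: "z \<in> U"
  shows "pd i (pd j (iter_pd is v)) z = pd j (pd i (iter_pd is v)) z"
proof (cases "i = j")
  case True then show ?thesis by simp
next
  case False
  define F where "F = iter_pd is v"
  define A where "A = pd i (pd j F)"
  define B where "B = pd j (pd i F)"
  have dF: "\<And>y k. y \<in> U \<Longrightarrow> ((\<lambda>u. F (y + u *\<^sub>R axis k 1)) has_real_derivative pd k F y) (at 0)"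
    unfolding F_def using sm_deriv[OF sm] by blast
  have dGi: "\<And>y k. y \<in> U \<Longrightarrow> ((\<lambda>u. pd i F (y + u *\<^sub>R axis k 1)) has_real_derivative pd k (pd i F) y) (at 0)"
    unfolding F_def using sm_deriv[OF sm, of _ "i # is"] by simp
  have dGj: "\<And>y k. y \<in> U \<Longrightarrow> ((\<lambda>u. pd j F (y + u *\<^sub>R axis k 1)) has_real_derivative pd k (pd j F) y) (at 0)"
    unfolding F_def using sm_deriv[OF sm, of _ "j # is"] by simp
  have cA: "continuous_on U A" unfolding A_def F_def using sm_cont[OF sm, of "i # j # is"] by simp
  have cB: "continuous_on U B" unfolding B_def F_def using sm_cont[OF sm, of "j # i # is"] by simp
  show ?thesis
  proof (rule ccontr)
    assume ne: "\<not> ?thesis"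
    define \<epsilon> where "\<epsilon> = \<bar>A z - B z\<bar> / 2"
    have \<epsilon>: "\<epsilon> > 0" using ne by (simp add: \<epsilon>_def A_def B_def F_def)
    have ev: "\<forall>\<^sub>F y in nhds z. y \<in> U \<and> \<bar>A y - A z\<bar> < \<epsilon> \<and> \<bar>B y - B z\<bar> < \<epsilon>"
    proof -
      have "isCont A z" using cA U z continuous_on_eq_continuous_at by blast
      then obtain d1 where "d1 > 0" "\<forall>y. dist y z < d1 \<longrightarrow> dist (A y) (A z) < \<epsilon>"
        using \<epsilon> unfolding continuous_at_eps_delta by blast
      then have 1: "\<forall>\<^sub>F y in nhds z. \<bar>A y - A z\<bar> < \<epsilon>"
        unfolding eventually_nhds_metric by (auto simp: dist_real_def intro!: exI[of _ d1])
      have "isCont B z" using cB U z continuous_on_eq_continuous_at by blast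
      then obtain d2 where "d2 > 0" "\<forall>y. dist y z < d2 \<longrightarrow> dist (B y) (B z) < \<epsilon>"
        using \<epsilon> unfolding continuous_at_eps_delta by blast
      then have 2: "\<forall>\<^sub>F y in nhds z. \<bar>B y - B z\<bar> < \<epsilon>"
        unfolding eventually_nhds_metric by (auto simp: dist_real_def intro!: exI[of _ d2])
      show ?thesis using eventually_nhds_in_open[OF U z] 1 2 by eventually_elim auto
    qed
    then obtain d where d: "d > 0" "\<And>y. dist y z < d \<Longrightarrow> y \<in> U \<and> \<bar>A y - A z\<bar> < \<epsilon> \<and> \<bar>B y - B z\<bar> < \<epsilon>"
      unfolding eventually_nhds_metric by blast
    define t where "t = d / 3"
    have t: "t > 0" using d by (simp add: t_def)
    have near: "dist (z + s *\<^sub>R axis a 1 + r *\<^sub>R axis b 1) z < d"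
      if "0 \<le> s" "s \<le> t" "0 \<le> r" "r \<le> t" for s r a b
    proof -
      have "norm (s *\<^sub>R axis a (1::real) + r *\<^sub>R axis b 1) \<le> norm (s *\<^sub>R axis a (1::real)) + norm (r *\<^sub>R axis b (1::real))"
        by (rule norm_triangle_ineq)
      also have "\<dots> = s + r" using that by simp
      finally have N: "norm (s *\<^sub>R axis a (1::real) + r *\<^sub>R axis b 1) \<le> s + r" .
      have "s + r < d" using that d(1) unfolding t_def by linarith
      then show ?thesis using N by (simp add: dist_norm add.assoc)
    qed
    have inU1: "z + s *\<^sub>R axis i 1 + r *\<^sub>R axis j 1 \<in> U" if "0 \<le> s" "s \<le> t" "0 \<le> r" "r \<le> t" for s r
      using d(2)[OF near[OF that]] by blast
    have inU2: "z + s *\<^sub>R axis j 1 + r *\<^sub>R axis i 1 \<in> U" if "0 \<le> s" "s \<le> t" "0 \<le> r" "r \<le> t" for s r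
      using d(2)[OF near[OF that]] by blast
    obtain s1 r1 where r1: "0 < s1" "s1 < t" "0 < r1" "r1 < t"
      "F (z + t *\<^sub>R axis i 1 + t *\<^sub>R axis j 1) - F (z + t *\<^sub>R axis i 1) - F (z + t *\<^sub>R axis j 1) + F z
      = t\<^sup>2 * B (z + s1 *\<^sub>R axis i 1 + r1 *\<^sub>R axis j 1)"
      using route[OF dF dGi t inU1] unfolding B_def by blast
    obtain s2 r2 where r2: "0 < s2" "s2 < t" "0 < r2" "r2 < t"
      "F (z + t *\<^sub>R axis j 1 + t *\<^sub>R axis i 1) - F (z + t *\<^sub>R axis j 1) - F (z + t *\<^sub>R axis i 1) + F z
      = t\<^sup>2 * A (z + s2 *\<^sub>R axis j 1 + r2 *\<^sub>R axis i 1)"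
      using route[OF dF dGj t inU2] unfolding A_def by blast
    have veq: "z + t *\<^sub>R axis j 1 + t *\<^sub>R axis i 1 = z + t *\<^sub>R axis i (1::real) + t *\<^sub>R axis j 1"
      by (simp add: algebra_simps)
    have "t\<^sup>2 * B (z + s1 *\<^sub>R axis i 1 + r1 *\<^sub>R axis j 1) = t\<^sup>2 * A (z + s2 *\<^sub>R axis j 1 + r2 *\<^sub>R axis i 1)"
      using r1(5) r2(5)[unfolded veq] by linarith
    then have eq: "B (z + s1 *\<^sub>R axis i 1 + r1 *\<^sub>R axis j 1) = A (z + s2 *\<^sub>R axis j 1 + r2 *\<^sub>R axis i 1)"
      using t by simp
    have "\<bar>B (z + s1 *\<^sub>R axis i 1 + r1 *\<^sub>R axis j 1) - B z\<bar> < \<epsilon>"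
      using d(2)[OF near[of s1 r1 i j]] r1 by auto
    moreover have "\<bar>A (z + s2 *\<^sub>R axis j 1 + r2 *\<^sub>R axis i 1) - A z\<bar> < \<epsilon>"
      using d(2)[OF near[of s2 r2 j i]] r2 by auto
    ultimately show False using eq unfolding \<epsilon>_def by (rule abs_help)
  qed
qed



lemma wsum:
  fixes f :: "'n::finite \<Rightarrow> real"
  shows "(\<Sum>l\<in>UNIV. f l * ((if l = i then s else 0) + (if l = j then t else 0))) = f i * s + f j * t"
proof -
  have "(\<Sum>l\<in>UNIV. f l * ((if l = i then s else 0) + (if l = j then t else 0)))
      = (\<Sum>l\<in>UNIV. (if l = i then f i * s else 0)) + (\<Sum>l\<in>UNIV. (if l = j then f j * t else 0))"
    by (subst sum.distrib[symmetric]) (rule sum.cong, auto simp: distrib_left)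
  also have "\<dots> = f i * s + f j * t" by simp
  finally show ?thesis .
qed

lemma psd_entry:
  fixes B :: "'n::finite \<Rightarrow> 'n \<Rightarrow> real"
  assumes sym: "\<And>i j. B i j = B j i"
    and psd: "\<And>w. 0 \<le> (\<Sum>k\<in>UNIV. \<Sum>l\<in>UNIV. B k l * w k * w l)"
  shows "B i j * B i j \<le> B i i * B j j" "0 \<le> B i i"
proof -
  have Q: "0 \<le> s * s * B i i + 2 * s * t * B i j + t * t * B j j" for s t
  proof -
    define w where "w k = (if k = i then s else 0) + (if k = j then t else 0)" for k
    have inner: "(\<Sum>l\<in>UNIV. B k l * w k * w l) = w k * (B k i * s + B k j * t)" for k
    proof -
      have "(\<Sum>l\<in>UNIV. B k l * w k * w l) = w k * (\<Sum>l\<in>UNIV. B k l * w l)"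
        by (simp add: sum_distrib_left mult_ac)
      also have "(\<Sum>l\<in>UNIV. B k l * w l) = B k i * s + B k j * t"
        unfolding w_def by (rule wsum)
      finally show ?thesis .
    qed
    have "(\<Sum>k\<in>UNIV. \<Sum>l\<in>UNIV. B k l * w k * w l) = (\<Sum>k\<in>UNIV. w k * (B k i * s + B k j * t))"
      by (rule sum.cong[OF refl]) (rule inner)
    also have "\<dots> = (\<Sum>k\<in>UNIV. (B k i * s + B k j * t) * w k)"
      by (simp only: mult.commute)
    also have "\<dots> = (B i i * s + B i j * t) * s + (B j i * s + B j j * t) * t"
      unfolding w_def by (rule wsum)
    also have "\<dots> = s * s * B i i + 2 * s * t * B i j + t * t * B j j"
      using sym[of j i] by (simp add: algebra_simps)
    finally show ?thesis using psd[of w] by simp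
  qed
  show nn: "0 \<le> B i i" using Q[of 1 0] by simp
  have nnj: "0 \<le> B j j" using Q[of 0 1] by simp
  show "B i j * B i j \<le> B i i * B j j"
  proof (cases "B i i > 0")
    case True
    have "0 \<le> B i j * B i j * B i i - 2 * B i j * B i j * B i i + B i i * B i i * B j j"
      using Q[of "- B i j" "B i i"] by (simp add: algebra_simps)
    then have "0 \<le> B i i * (B i i * B j j - B i j * B i j)" by (simp add: algebra_simps)
    then have "0 \<le> B i i * B j j - B i j * B i j" using True by (simp add: zero_le_mult_iff)
    then show ?thesis by simp
  next
    case False
    then have z: "B i i = 0" using nn by simp
    show ?thesis
    proof (cases "B i j = 0")
      case True then show ?thesis using z by simp
    next
      case nz: False
      have "0 \<le> 2 * (- (B j j + 1) / (2 * B i j)) * 1 * B i j + 1 * 1 * B j j"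
        using Q[of "- (B j j + 1) / (2 * B i j)" 1] z by simp
      also have "2 * (- (B j j + 1) / (2 * B i j)) * 1 * B i j = - (B j j + 1)"
        using nz by (simp add: field_simps)
      finally show ?thesis by simp
    qed
  qed
qed

lemma psd_frob:
  fixes B :: "'n::finite \<Rightarrow> 'n \<Rightarrow> real"
  assumes sym: "\<And>i j. B i j = B j i"
    and psd: "\<And>w. 0 \<le> (\<Sum>k\<in>UNIV. \<Sum>l\<in>UNIV. B k l * w k * w l)"
  shows "(\<Sum>i\<in>UNIV. \<Sum>j\<in>UNIV. B i j * B i j) \<le> (\<Sum>i\<in>UNIV. B i i) * (\<Sum>i\<in>UNIV. B i i)"
proof -
  have "(\<Sum>i\<in>UNIV. \<Sum>j\<in>UNIV. B i j * B i j) \<le> (\<Sum>i\<in>UNIV. \<Sum>j\<in>UNIV. B i i * B j j)"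
    by (intro sum_mono psd_entry[OF sym psd])
  also have "\<dots> = (\<Sum>i\<in>UNIV. B i i) * (\<Sum>i\<in>UNIV. B i i)" by (simp add: sum_product)
  finally show ?thesis .
qed



lemma dsum_prod: "(\<Sum>i\<in>UNIV. \<Sum>j\<in>UNIV. f i * g j) = (\<Sum>i\<in>(UNIV::'n::finite set). f i) * (\<Sum>j\<in>(UNIV::'n set). (g j::real))"
  by (simp add: sum_product)

lemma dsum_cong: "(\<And>i j. f i j = g i j) \<Longrightarrow> (\<Sum>i\<in>A. \<Sum>j\<in>B. f i j) = (\<Sum>i\<in>A. \<Sum>j\<in>B. g i j)"
  by simp

lemma key_ineq:
  fixes H :: "'n::finite \<Rightarrow> 'n \<Rightarrow> real" and g :: "'n \<Rightarrow> real"
  assumes sym: "\<And>i j. H i j = H j i"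
   and Npos: "(\<Sum>i\<in>UNIV. g i * g i) > 0"
   and tang: "\<And>w. (\<Sum>i\<in>UNIV. w i * g i) = 0 \<Longrightarrow> (\<Sum>k\<in>UNIV. \<Sum>l\<in>UNIV. H k l * w k * w l) \<le> 0"
  shows "0 \<le> (\<Sum>i\<in>UNIV. g i * g i) * ((\<Sum>i\<in>UNIV. H i i) * (\<Sum>i\<in>UNIV. H i i) - (\<Sum>i\<in>UNIV. \<Sum>j\<in>UNIV. H i j * H i j))
     - 2 * ((\<Sum>i\<in>UNIV. H i i) * (\<Sum>i\<in>UNIV. g i * (\<Sum>j\<in>UNIV. H i j * g j))
            - (\<Sum>i\<in>UNIV. (\<Sum>j\<in>UNIV. H i j * g j) * (\<Sum>j\<in>UNIV. H i j * g j)))"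
proof -
  define N where "N = (\<Sum>i\<in>UNIV. g i * g i)"
  define L where "L = (\<Sum>i\<in>UNIV. H i i)"
  define S1 where "S1 = (\<Sum>i\<in>UNIV. \<Sum>j\<in>UNIV. H i j * H i j)"
  define h where "h i = (\<Sum>j\<in>UNIV. H i j * g j)" for i
  define a where "a = (\<Sum>i\<in>UNIV. g i * h i)"
  define K where "K = (\<Sum>i\<in>UNIV. h i * h i)"
  have hs: "(\<Sum>i\<in>UNIV. H i j * g i) = h j" for j unfolding h_def by (simp add: sym)
  have ah: "(\<Sum>i\<in>UNIV. h i * g i) = a" unfolding a_def by (simp add: mult.commute)
  have s1: "(\<Sum>i\<in>UNIV. \<Sum>j\<in>UNIV. (g i * h j) * (g i * h j)) = N * K"
    unfolding N_def K_def by (subst dsum_prod[symmetric]) (simp add: mult_ac)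
  have s2: "(\<Sum>i\<in>UNIV. \<Sum>j\<in>UNIV. (g j * h i) * (g j * h i)) = N * K"
    unfolding N_def K_def by (subst mult.commute, subst dsum_prod[symmetric]) (simp add: mult_ac)
  have s3: "(\<Sum>i\<in>UNIV. \<Sum>j\<in>UNIV. (g i * h j) * (g j * h i)) = a * a"
    unfolding a_def by (subst dsum_prod[symmetric]) (simp add: mult_ac)
  have s4: "(\<Sum>i\<in>UNIV. \<Sum>j\<in>UNIV. (g i * g j) * (g i * g j)) = N * N"
    unfolding N_def by (subst dsum_prod[symmetric]) (simp add: mult_ac)
  have s5: "(\<Sum>i\<in>UNIV. \<Sum>j\<in>UNIV. H i j * (g i * h j)) = K"
  proof -
    have "(\<Sum>i\<in>UNIV. \<Sum>j\<in>UNIV. H i j * (g i * h j)) = (\<Sum>j\<in>UNIV. \<Sum>i\<in>UNIV. h j * (H i j * g i))"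
      by (subst sum.swap) (simp add: mult_ac)
    also have "\<dots> = (\<Sum>j\<in>UNIV. h j * h j)" by (simp add: sum_distrib_left[symmetric] hs)
    finally show ?thesis unfolding K_def .
  qed
  have s6: "(\<Sum>i\<in>UNIV. \<Sum>j\<in>UNIV. H i j * (g j * h i)) = K"
  proof -
    have "(\<Sum>i\<in>UNIV. \<Sum>j\<in>UNIV. H i j * (g j * h i)) = (\<Sum>i\<in>UNIV. \<Sum>j\<in>UNIV. h i * (H i j * g j))"
      by (simp add: mult_ac)
    also have "\<dots> = (\<Sum>i\<in>UNIV. h i * h i)" by (simp add: sum_distrib_left[symmetric] h_def)
    finally show ?thesis unfolding K_def .
  qed
  have s7: "(\<Sum>i\<in>UNIV. \<Sum>j\<in>UNIV. H i j * (g i * g j)) = a"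
  proof -
    have "(\<Sum>i\<in>UNIV. \<Sum>j\<in>UNIV. H i j * (g i * g j)) = (\<Sum>i\<in>UNIV. \<Sum>j\<in>UNIV. g i * (H i j * g j))"
      by (simp add: mult_ac)
    also have "\<dots> = (\<Sum>i\<in>UNIV. g i * h i)" by (simp add: sum_distrib_left[symmetric] h_def)
    finally show ?thesis unfolding a_def .
  qed
  have s8: "(\<Sum>i\<in>UNIV. \<Sum>j\<in>UNIV. (g i * h j) * (g i * g j)) = N * a"
    unfolding N_def ah[symmetric] by (subst dsum_prod[symmetric]) (simp add: mult_ac)
  have s9: "(\<Sum>i\<in>UNIV. \<Sum>j\<in>UNIV. (g j * h i) * (g i * g j)) = a * N"
    unfolding N_def ah[symmetric] by (subst dsum_prod[symmetric]) (simp add: mult_ac)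
  define A where "A i j = N * N * H i j - N * (g i * h j + g j * h i) + g i * g j * a" for i j
  have Asym: "A i j = A j i" for i j unfolding A_def using sym[of i j] by (simp add: algebra_simps)
  have trA: "(\<Sum>i\<in>UNIV. A i i) = N * N * L - N * a"
  proof -
    have "(\<Sum>i\<in>UNIV. A i i) = (\<Sum>i\<in>UNIV. N * N * H i i - 2 * N * (g i * h i) + a * (g i * g i))"
      unfolding A_def by (rule sum.cong) (auto simp: algebra_simps)
    also have "\<dots> = N * N * L - 2 * N * a + a * N"
      by (simp add: sum.distrib sum_subtractf sum_distrib_left[symmetric] L_def a_def N_def)
    finally show ?thesis by (simp add: algebra_simps)
  qed
  have pt: "A i j * A i j = N^4 * (H i j * H i j) + N^2 * ((g i * h j) * (g i * h j))
      + N^2 * ((g j * h i) * (g j * h i)) + 2 * N^2 * ((g i * h j) * (g j * h i))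
      + a^2 * ((g i * g j) * (g i * g j)) - 2 * N^3 * (H i j * (g i * h j))
      - 2 * N^3 * (H i j * (g j * h i)) + 2 * N^2 * a * (H i j * (g i * g j))
      - 2 * N * a * ((g i * h j) * (g i * g j)) - 2 * N * a * ((g j * h i) * (g i * g j))" for i j
    unfolding A_def by algebra
  have frobA: "(\<Sum>i\<in>UNIV. \<Sum>j\<in>UNIV. A i j * A i j) = N^4 * S1 - 2 * N^3 * K + N^2 * a^2"
  proof -
    have "(\<Sum>i\<in>UNIV. \<Sum>j\<in>UNIV. A i j * A i j) =
      N^4 * (\<Sum>i\<in>UNIV. \<Sum>j\<in>UNIV. H i j * H i j) + N^2 * (\<Sum>i\<in>UNIV. \<Sum>j\<in>UNIV. (g i * h j) * (g i * h j))
      + N^2 * (\<Sum>i\<in>UNIV. \<Sum>j\<in>UNIV. (g j * h i) * (g j * h i)) + 2 * N^2 * (\<Sum>i\<in>UNIV. \<Sum>j\<in>UNIV. (g i * h j) * (g j * h i))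
      + a^2 * (\<Sum>i\<in>UNIV. \<Sum>j\<in>UNIV. (g i * g j) * (g i * g j)) - 2 * N^3 * (\<Sum>i\<in>UNIV. \<Sum>j\<in>UNIV. H i j * (g i * h j))
      - 2 * N^3 * (\<Sum>i\<in>UNIV. \<Sum>j\<in>UNIV. H i j * (g j * h i)) + 2 * N^2 * a * (\<Sum>i\<in>UNIV. \<Sum>j\<in>UNIV. H i j * (g i * g j))
      - 2 * N * a * (\<Sum>i\<in>UNIV. \<Sum>j\<in>UNIV. (g i * h j) * (g i * g j)) - 2 * N * a * (\<Sum>i\<in>UNIV. \<Sum>j\<in>UNIV. (g j * h i) * (g i * g j))"
      unfolding pt by (simp only: sum.distrib sum_subtractf sum_distrib_left)
    also have "\<dots> = N^4 * S1 - 2 * N^3 * K + N^2 * a^2"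
      unfolding s1 s2 s3 s4 s5 s6 s7 s8 s9 S1_def[symmetric] by algebra
    finally show ?thesis .
  qed
  have quad: "(\<Sum>k\<in>UNIV. \<Sum>l\<in>UNIV. A k l * w k * w l) \<le> 0" for w
  proof -
    define c where "c = (\<Sum>i\<in>UNIV. w i * g i)"
    define d where "d = (\<Sum>i\<in>UNIV. h i * w i)"
    define u where "u k = N * w k - c * g k" for k
    have "(\<Sum>i\<in>UNIV. u i * g i) = N * (\<Sum>i\<in>UNIV. w i * g i) - c * (\<Sum>i\<in>UNIV. g i * g i)"
      unfolding u_def by (simp add: sum_distrib_left sum_subtractf[symmetric] algebra_simps)
    then have ug: "(\<Sum>i\<in>UNIV. u i * g i) = 0" by (simp add: c_def N_def)
    have ptq: "A k l * w k * w l = N * N * (H k l * w k * w l) - N * ((g k * w k) * (h l * w l))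
        - N * ((h k * w k) * (g l * w l)) + a * ((g k * w k) * (g l * w l))" for k l
      unfolding A_def by algebra
    have ptu: "H k l * u k * u l = N * N * (H k l * w k * w l) - N * c * (w k * (H k l * g l))
        - N * c * (w l * (H k l * g k)) + c * c * (H k l * (g k * g l))" for k l
      unfolding u_def by algebra
    have t1: "(\<Sum>k\<in>UNIV. \<Sum>l\<in>UNIV. (g k * w k) * (h l * w l)) = c * d"
      unfolding c_def d_def by (subst dsum_prod[symmetric]) (simp add: mult_ac)
    have t2: "(\<Sum>k\<in>UNIV. \<Sum>l\<in>UNIV. (h k * w k) * (g l * w l)) = d * c"
      unfolding c_def d_def by (subst dsum_prod[symmetric]) (simp add: mult_ac)
    have t3: "(\<Sum>k\<in>UNIV. \<Sum>l\<in>UNIV. (g k * w k) * (g l * w l)) = c * c"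
      unfolding c_def by (subst dsum_prod[symmetric]) (simp add: mult_ac)
    have t4: "(\<Sum>k\<in>UNIV. \<Sum>l\<in>UNIV. w k * (H k l * g l)) = d"
    proof -
      have "(\<Sum>k\<in>UNIV. \<Sum>l\<in>UNIV. w k * (H k l * g l)) = (\<Sum>k\<in>UNIV. w k * h k)"
        by (simp add: h_def sum_distrib_left)
      then show ?thesis unfolding d_def by (simp add: mult_ac)
    qed
    have t5: "(\<Sum>k\<in>UNIV. \<Sum>l\<in>UNIV. w l * (H k l * g k)) = d"
    proof -
      have "(\<Sum>k\<in>UNIV. \<Sum>l\<in>UNIV. w l * (H k l * g k)) = (\<Sum>l\<in>UNIV. \<Sum>k\<in>UNIV. w l * (H k l * g k))"
        by (rule sum.swap)
      also have "\<dots> = (\<Sum>l\<in>UNIV. w l * h l)" by (simp add: sum_distrib_left[symmetric] hs)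
      finally show ?thesis unfolding d_def by (simp add: mult_ac)
    qed
    have "(\<Sum>k\<in>UNIV. \<Sum>l\<in>UNIV. A k l * w k * w l) =
       N * N * (\<Sum>k\<in>UNIV. \<Sum>l\<in>UNIV. H k l * w k * w l) - N * (\<Sum>k\<in>UNIV. \<Sum>l\<in>UNIV. (g k * w k) * (h l * w l))
        - N * (\<Sum>k\<in>UNIV. \<Sum>l\<in>UNIV. (h k * w k) * (g l * w l)) + a * (\<Sum>k\<in>UNIV. \<Sum>l\<in>UNIV. (g k * w k) * (g l * w l))"
      unfolding ptq by (simp only: sum.distrib sum_subtractf sum_distrib_left)
    also have "\<dots> = N * N * (\<Sum>k\<in>UNIV. \<Sum>l\<in>UNIV. H k l * w k * w l) - 2 * N * c * d + a * c * c"
      unfolding t1 t2 t3 by algebra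
    also have "\<dots> = (\<Sum>k\<in>UNIV. \<Sum>l\<in>UNIV. H k l * u k * u l)"
    proof -
      have "(\<Sum>k\<in>UNIV. \<Sum>l\<in>UNIV. H k l * u k * u l) =
        N * N * (\<Sum>k\<in>UNIV. \<Sum>l\<in>UNIV. H k l * w k * w l) - N * c * (\<Sum>k\<in>UNIV. \<Sum>l\<in>UNIV. w k * (H k l * g l))
        - N * c * (\<Sum>k\<in>UNIV. \<Sum>l\<in>UNIV. w l * (H k l * g k)) + c * c * (\<Sum>k\<in>UNIV. \<Sum>l\<in>UNIV. H k l * (g k * g l))"
        unfolding ptu by (simp only: sum.distrib sum_subtractf sum_distrib_left)
      also have "\<dots> = N * N * (\<Sum>k\<in>UNIV. \<Sum>l\<in>UNIV. H k l * w k * w l) - 2 * N * c * d + a * c * c"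
        unfolding t4 t5 s7 by algebra
      finally show ?thesis by simp
    qed
    also have "\<dots> \<le> 0" by (rule tang[OF ug])
    finally show ?thesis .
  qed
  define B where "B i j = - A i j" for i j
  have "(\<Sum>i\<in>UNIV. \<Sum>j\<in>UNIV. B i j * B i j) \<le> (\<Sum>i\<in>UNIV. B i i) * (\<Sum>i\<in>UNIV. B i i)"
  proof (rule psd_frob)
    show "B i j = B j i" for i j unfolding B_def using Asym by simp
    show "0 \<le> (\<Sum>k\<in>UNIV. \<Sum>l\<in>UNIV. B k l * w k * w l)" for w
      using quad[of w] unfolding B_def by (simp add: sum_negf)
  qed
  then have "N^4 * S1 - 2 * N^3 * K + N^2 * a^2 \<le> (N * N * L - N * a) * (N * N * L - N * a)"
    unfolding B_def frobA[symmetric] trA[symmetric] by (simp add: sum_negf)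
  then have "0 \<le> N^3 * (N * (L * L - S1) - 2 * (L * a - K))"
    by (simp add: algebra_simps power_def)
  then have "0 \<le> N * (L * L - S1) - 2 * (L * a - K)"
    using Npos unfolding N_def by (simp add: zero_le_mult_iff)
  then show ?thesis unfolding N_def L_def S1_def a_def K_def h_def .
qed



lemma dv_frechet:
  assumes sm: "smooth_on U v" and U: "open U" and z: "z \<in> U"
  shows "(v has_derivative (\<lambda>h. \<Sum>i\<in>UNIV. pd i v z * h$i)) (at z)"
  using smooth_frechet[OF sm U z, of "[]"] by simp

lemma dpd_frechet:
  assumes sm: "smooth_on U v" and U: "open U" and z: "z \<in> U"
  shows "(pd l v has_derivative (\<lambda>h. \<Sum>i\<in>UNIV. pd i (pd l v) z * h$i)) (at z)"
  using smooth_frechet[OF sm U z, of "[l]"] by simp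

lemma curve_deriv:
  fixes x w G :: "real^'n"
  shows "((\<lambda>t. x + (\<sigma> * t) *\<^sub>R w + (c * t\<^sup>2) *\<^sub>R G) has_derivative
           (\<lambda>s. s *\<^sub>R (\<sigma> *\<^sub>R w + (2 * c * t) *\<^sub>R G))) (at t)"
  by (auto intro!: derivative_eq_intros simp: algebra_simps)

lemma chain_real:
  fixes \<gamma> :: "real \<Rightarrow> real^'n"
  assumes dg: "(\<gamma> has_derivative (\<lambda>s. s *\<^sub>R g')) (at t)"
    and dF: "(F has_derivative (\<lambda>h. \<Sum>i\<in>UNIV. D i * h$i)) (at (\<gamma> t))"
  shows "((\<lambda>t. F (\<gamma> t)) has_real_derivative (\<Sum>i\<in>UNIV. D i * g'$i)) (at t)"
proof -
  have "((F \<circ> \<gamma>) has_derivative ((\<lambda>h. \<Sum>i\<in>UNIV. D i * h$i) \<circ> (\<lambda>s. s *\<^sub>R g'))) (at t)"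
    by (rule diff_chain_at[OF dg dF])
  then show ?thesis unfolding has_field_derivative_def comp_def
    by (rule has_derivative_eq_rhs) (auto simp: fun_eq_iff sum_distrib_left mult_ac)
qed

lemma allE2: "\<forall>x y. P x y \<Longrightarrow> (P a b \<Longrightarrow> R) \<Longrightarrow> R" by blast

lemma qc_tangent:
  fixes v :: "real^'n \<Rightarrow> real"
  assumes qc: "quasi_concave v" and sm: "smooth_on U v" and U: "open U" and x: "x \<in> U"
    and Npos: "(\<Sum>i\<in>UNIV. pd i v x * pd i v x) > 0"
    and wg: "(\<Sum>i\<in>UNIV. w$i * pd i v x) = 0"
  shows "(\<Sum>k\<in>UNIV. \<Sum>l\<in>UNIV. pd k (pd l v) x * w$k * w$l) \<le> 0"
proof (rule ccontr)
  define q where "q = (\<Sum>k\<in>UNIV. \<Sum>l\<in>UNIV. pd k (pd l v) x * w$k * w$l)"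
  assume "\<not> ?thesis"
  then have q: "q > 0" unfolding q_def by simp
  define N where "N = (\<Sum>i\<in>UNIV. pd i v x * pd i v x)"
  have N: "N > 0" using Npos unfolding N_def .
  define G :: "real^'n" where "G = (\<chi> i. pd i v x)"
  define c where "c = - q / (4 * N)"
  have cN: "c * N = - q / 4" using N by (simp add: c_def)
  define \<gamma> where "\<gamma> \<sigma> t = x + (\<sigma> * t) *\<^sub>R w + (c * t\<^sup>2) *\<^sub>R G" for \<sigma> t
  have dv: "\<And>y. y \<in> U \<Longrightarrow> (v has_derivative (\<lambda>h. \<Sum>i\<in>UNIV. pd i v y * h$i)) (at y)"
    using dv_frechet[OF sm U] by blast
  have curve: "\<exists>\<delta>>0. \<forall>t. 0 < t \<and> t < \<delta> \<longrightarrow> v x < v (\<gamma> \<sigma> t)" if \<sigma>: "\<sigma> * \<sigma> = 1" for \<sigma>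
  proof -
    have dg: "(\<gamma> \<sigma> has_derivative (\<lambda>s. s *\<^sub>R (\<sigma> *\<^sub>R w + (2 * c * t) *\<^sub>R G))) (at t)" for t
      unfolding \<gamma>_def by (rule curve_deriv)
    have g0: "\<gamma> \<sigma> 0 = x" by (simp add: \<gamma>_def)
    obtain r where r: "r > 0" "ball x r \<subseteq> U" using U x openE by blast
    have "isCont (\<gamma> \<sigma>) 0" using dg[of 0] has_derivative_continuous by blast
    then obtain \<delta>1 where \<delta>1: "\<delta>1 > 0" "\<And>t. dist t 0 < \<delta>1 \<Longrightarrow> dist (\<gamma> \<sigma> t) (\<gamma> \<sigma> 0) < r"
      using r(1) unfolding continuous_at_eps_delta by blast
    have inU: "\<gamma> \<sigma> t \<in> U" if "\<bar>t\<bar> < \<delta>1" for t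
      using \<delta>1(2)[of t] that r(2) g0 by (auto simp: dist_commute)
    define \<psi> where "\<psi> t = (\<Sum>l\<in>UNIV. pd l v (\<gamma> \<sigma> t) * (\<sigma> * w$l + 2 * c * t * G$l))" for t
    have dphi: "((\<lambda>t. v (\<gamma> \<sigma> t)) has_real_derivative \<psi> t) (at t)" if "\<bar>t\<bar> < \<delta>1" for t
    proof -
      have "((\<lambda>t. v (\<gamma> \<sigma> t)) has_real_derivative
          (\<Sum>i\<in>UNIV. pd i v (\<gamma> \<sigma> t) * (\<sigma> *\<^sub>R w + (2 * c * t) *\<^sub>R G)$i)) (at t)"
        by (rule chain_real[OF dg dv[OF inU[OF that]]])
      then show ?thesis unfolding \<psi>_def by (simp add: mult_ac)
    qed
    have dpsi: "(\<psi> has_real_derivative q / 2) (at 0)"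
    proof -
      have dP: "((\<lambda>t. pd l v (\<gamma> \<sigma> t)) has_real_derivative
           (\<Sum>k\<in>UNIV. pd k (pd l v) x * (\<sigma> *\<^sub>R w + (2 * c * 0) *\<^sub>R G)$k)) (at 0)" for l
        by (rule chain_real[OF dg]) (use dpd_frechet[OF sm U x, of l] g0 in simp)
      have dQ: "((\<lambda>t. \<sigma> * w$l + 2 * c * t * G$l) has_real_derivative 2 * c * G$l) (at 0)" for l
        by (auto intro!: derivative_eq_intros)
      have "(\<psi> has_real_derivative (\<Sum>l\<in>UNIV.
           (\<Sum>k\<in>UNIV. pd k (pd l v) x * (\<sigma> *\<^sub>R w + (2 * c * 0) *\<^sub>R G)$k) * (\<sigma> * w$l + 2 * c * 0 * G$l)
           + (2 * c * G$l) * pd l v (\<gamma> \<sigma> 0))) (at 0)"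
        unfolding \<psi>_def by (intro DERIV_sum DERIV_mult dP dQ)
      moreover have "(\<Sum>l\<in>UNIV.
           (\<Sum>k\<in>UNIV. pd k (pd l v) x * (\<sigma> *\<^sub>R w + (2 * c * 0) *\<^sub>R G)$k) * (\<sigma> * w$l + 2 * c * 0 * G$l)
           + (2 * c * G$l) * pd l v (\<gamma> \<sigma> 0)) = q / 2"
      proof -
        have "(\<Sum>l\<in>UNIV.
           (\<Sum>k\<in>UNIV. pd k (pd l v) x * (\<sigma> *\<^sub>R w + (2 * c * 0) *\<^sub>R G)$k) * (\<sigma> * w$l + 2 * c * 0 * G$l)
           + (2 * c * G$l) * pd l v (\<gamma> \<sigma> 0))
           = (\<Sum>l\<in>UNIV. (\<sigma> * \<sigma>) * (\<Sum>k\<in>UNIV. pd k (pd l v) x * w$k * w$l) + 2 * c * (pd l v x * pd l v x))"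
          by (intro sum.cong refl) (simp add: g0 G_def sum_distrib_right sum_distrib_left mult_ac)
        also have "\<dots> = q + 2 * (c * N)"
        proof -
          have qs: "(\<Sum>l\<in>UNIV. \<Sum>k\<in>UNIV. pd k (pd l v) x * w$k * w$l) = q"
            unfolding q_def by (rule sum.swap)
          show ?thesis unfolding \<sigma> using qs
            by (simp add: sum.distrib N_def sum_distrib_left mult.assoc)
        qed
        also have "\<dots> = q / 2" using cN by simp
        finally show ?thesis .
      qed
      ultimately show ?thesis by (simp only:)
    qed
    have psi0: "\<psi> 0 = 0"
    proof -
      have "\<psi> 0 = \<sigma> * (\<Sum>i\<in>UNIV. w$i * pd i v x)"
        unfolding \<psi>_def by (simp add: g0 sum_distrib_left mult_ac)
      then show ?thesis using wg by simp
    qed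
    obtain d where d: "d > 0" "\<And>h. 0 < h \<Longrightarrow> h < d \<Longrightarrow> \<psi> 0 < \<psi> (0 + h)"
      using DERIV_pos_inc_right[OF dpsi] q by auto
    show ?thesis
    proof (intro exI[of _ "min \<delta>1 d"] conjI allI impI)
      show "min \<delta>1 d > 0" using \<delta>1 d by simp
      fix t assume t: "0 < t \<and> t < min \<delta>1 d"
      have "\<exists>z. 0 < z \<and> z < t \<and> v (\<gamma> \<sigma> t) - v (\<gamma> \<sigma> 0) = (t - 0) * \<psi> z"
        by (rule MVT2[of 0 t "\<lambda>t. v (\<gamma> \<sigma> t)" \<psi>]) (use t in \<open>auto intro!: dphi\<close>)
      then obtain z where z: "0 < z" "z < t" "v (\<gamma> \<sigma> t) - v (\<gamma> \<sigma> 0) = (t - 0) * \<psi> z" by blast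
      have "\<psi> z > 0" using d(2)[of z] z t psi0 by simp
      then have "v (\<gamma> \<sigma> t) - v x > 0" using z t g0 by simp
      then show "v x < v (\<gamma> \<sigma> t)" by simp
    qed
  qed
  obtain \<delta>p where \<delta>p: "\<delta>p > 0" "\<And>t. 0 < t \<Longrightarrow> t < \<delta>p \<Longrightarrow> v x < v (\<gamma> 1 t)"
    using curve[of 1] by auto
  obtain \<delta>m where \<delta>m: "\<delta>m > 0" "\<And>t. 0 < t \<Longrightarrow> t < \<delta>m \<Longrightarrow> v x < v (\<gamma> (-1) t)"
    using curve[of "-1"] by auto
  define \<mu> where "\<mu> s = v (x + s *\<^sub>R (c *\<^sub>R G))" for s
  have dchi: "(\<mu> has_real_derivative c * N) (at 0)"
  proof -
    have "(\<mu> has_real_derivative (\<Sum>i\<in>UNIV. pd i v x * (c *\<^sub>R G)$i)) (at 0)"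
      unfolding \<mu>_def by (rule chain_real) (auto intro!: derivative_eq_intros dv[OF x])
    moreover have "(\<Sum>i\<in>UNIV. pd i v x * (c *\<^sub>R G)$i) = c * N"
      by (simp add: G_def N_def sum_distrib_left mult_ac)
    ultimately show ?thesis by simp
  qed
  obtain d2 where d2: "d2 > 0" "\<And>h. 0 < h \<Longrightarrow> h < d2 \<Longrightarrow> \<mu> (0 + h) < \<mu> 0"
    using DERIV_neg_dec_right[OF dchi] cN q by auto
  define t where "t = min (min \<delta>p \<delta>m) (min 1 d2) / 2"
  have t: "0 < t" "t < \<delta>p" "t < \<delta>m" "t < 1" "t < d2"
    using \<delta>p \<delta>m d2 by (auto simp: t_def)
  have tt: "t\<^sup>2 < d2"
  proof -
    have "t\<^sup>2 = t * t" by (simp add: power2_eq_square)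
    also have "\<dots> < 1 * t" using t by (intro mult_strict_right_mono) auto
    finally show ?thesis using t by simp
  qed
  have mid: "(1/2) *\<^sub>R \<gamma> 1 t + (1 - 1/2) *\<^sub>R \<gamma> (-1) t = x + (t\<^sup>2) *\<^sub>R (c *\<^sub>R G)"
    unfolding \<gamma>_def by (simp only: vec_eq_iff) (simp add: algebra_simps)
  have "min (v (\<gamma> 1 t)) (v (\<gamma> (-1) t)) \<le> v ((1/2) *\<^sub>R \<gamma> 1 t + (1 - 1/2) *\<^sub>R \<gamma> (-1) t)"
    using qc unfolding quasi_concave_def by (rule allE2) (erule allE, erule mp, simp)
  also have "\<dots> = \<mu> (t\<^sup>2)" unfolding mid \<mu>_def ..
  also have "\<dots> < \<mu> 0" using d2(2)[of "t\<^sup>2"] tt t by simp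
  also have "\<mu> 0 = v x" by (simp add: \<mu>_def)
  finally show False using \<delta>p(2)[of t] \<delta>m(2)[of t] t by simp
qed



lemma DERIV_fix: "(f has_real_derivative D) (at 0) \<Longrightarrow> D = E \<Longrightarrow> (f has_real_derivative E) (at 0)"
  by simp

lemma pd_eqI: "((\<lambda>t. f (x + t *\<^sub>R axis i 1)) has_real_derivative D) (at 0) \<Longrightarrow> pd i f x = D"
  unfolding pd_def by (rule DERIV_imp_deriv)

lemma comp_formula:
  "((1 / (norm (grad v y))\<^sup>2) *\<^sub>R (laplacian v y *\<^sub>R grad v y - hessian v y *v grad v y)) $ i
   = (laplacian v y * pd i v y - (\<Sum>j\<in>UNIV. pd i (pd j v) y * pd j v y)) / (\<Sum>k\<in>UNIV. pd k v y * pd k v y)"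
proof -
  have n: "(norm (grad v y))\<^sup>2 = (\<Sum>k\<in>UNIV. pd k v y * pd k v y)"
    unfolding power2_norm_eq_inner by (simp add: inner_vec_def grad_def)
  show ?thesis unfolding n
    by (simp add: matrix_vector_mult_def grad_def hessian_def)
qed

lemma third_sym:
  assumes sm: "smooth_on U v" and U: "open U" and x: "x \<in> U"
  shows "pd i (pd k (pd k v)) x = pd k (pd k (pd i v)) x"
proof -
  have "pd i (pd k (pd k v)) x = pd k (pd i (pd k v)) x"
    using clairaut[OF sm U x, of i k "[k]"] by simp
  also have "\<dots> = pd k (pd k (pd i v)) x"
  proof -
    obtain r where r: "r > 0" "ball x r \<subseteq> U" using U x openE by blast
    have ev: "\<forall>\<^sub>F t in nhds 0. pd i (pd k v) (x + t *\<^sub>R axis k 1) = pd k (pd i v) (x + t *\<^sub>R axis k 1)"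
      unfolding eventually_nhds_metric
    proof (intro exI[of _ r] conjI allI impI r(1))
      fix t :: real assume "dist t 0 < r"
      then have "x + t *\<^sub>R axis k 1 \<in> U" using r(2) by (auto simp: dist_norm)
      then show "pd i (pd k v) (x + t *\<^sub>R axis k 1) = pd k (pd i v) (x + t *\<^sub>R axis k 1)"
        using clairaut[OF sm U, of _ i k "[]"] by simp
    qed
    show ?thesis unfolding pd_def[of k "pd i (pd k v)"] pd_def[of k "pd k (pd i v)"]
      by (rule deriv_cong_ev[OF ev refl])
  qed
  finally show ?thesis .
qed

theorem lemma6p2:
  fixes v :: "real^'n \<Rightarrow> real" and U :: "(real^'n) set"
  assumes "CARD('n) \<ge> 2"
    and "continuous_on UNIV v"
    and "quasi_concave v"
    and "open U" and "connected U" and "U \<noteq> {}"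
    and "smooth_on U v"
    and "x \<in> U" and "grad v x \<noteq> 0"
  shows "divergence
           (\<lambda>y. (1 / (norm (grad v y))\<^sup>2) *\<^sub>R
                  (laplacian v y *\<^sub>R grad v y - hessian v y *v grad v y)) x \<ge> 0"
proof -
  note qc = assms(3) and U = assms(4) and sm = assms(7) and x = assms(8)
  define g where "g k = pd k v x" for k
  define H where "H k l = pd k (pd l v) x" for k l
  define T where "T i k l = pd i (pd k (pd l v)) x" for i k l
  define N where "N = (\<Sum>k\<in>UNIV. g k * g k)"
  define L where "L = (\<Sum>k\<in>UNIV. H k k)"
  define M where "M i = L * g i - (\<Sum>j\<in>UNIV. H i j * g j)" for i
  define dN where "dN i = (\<Sum>k\<in>UNIV. H i k * g k + H i k * g k)" for i
  define dM where "dM i = (\<Sum>k\<in>UNIV. T i k k) * g i + H i i * L - (\<Sum>j\<in>UNIV. T i i j * g j + H i j * H i j)" for i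
  have Nn: "N = (norm (grad v x))\<^sup>2"
    unfolding power2_norm_eq_inner by (simp add: inner_vec_def grad_def N_def g_def)
  have Npos: "N > 0" unfolding Nn using assms(9) by simp
  have a1: "((\<lambda>t. pd k v (x + t *\<^sub>R axis i 1)) has_real_derivative H i k) (at 0)" for k i
    using sm_deriv[OF sm x, of "[k]" i] by (simp add: H_def)
  have a2: "((\<lambda>t. pd k (pd l v) (x + t *\<^sub>R axis i 1)) has_real_derivative T i k l) (at 0)" for k l i
    using sm_deriv[OF sm x, of "[k, l]" i] by (simp add: T_def)
  have dD: "((\<lambda>t. ((\<Sum>k\<in>UNIV. pd k (pd k v) (x + t *\<^sub>R axis i 1)) * pd i v (x + t *\<^sub>R axis i 1)
              - (\<Sum>j\<in>UNIV. pd i (pd j v) (x + t *\<^sub>R axis i 1) * pd j v (x + t *\<^sub>R axis i 1)))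
            / (\<Sum>k\<in>UNIV. pd k v (x + t *\<^sub>R axis i 1) * pd k v (x + t *\<^sub>R axis i 1)))
        has_real_derivative (dM i * N - M i * dN i) / (N * N)) (at 0)" for i
    apply (rule DERIV_fix)
     apply (rule DERIV_divide)
       apply (rule DERIV_diff DERIV_mult DERIV_sum a1 a2)+
    using Npos apply (simp add: N_def g_def)
    apply (simp add: dM_def dN_def M_def N_def L_def g_def H_def)
    done
  have div_eq: "divergence
           (\<lambda>y. (1 / (norm (grad v y))\<^sup>2) *\<^sub>R
                  (laplacian v y *\<^sub>R grad v y - hessian v y *v grad v y)) x
       = (\<Sum>i\<in>UNIV. (dM i * N - M i * dN i) / (N * N))"
    unfolding divergence_def
  proof (rule sum.cong[OF refl])
    fix i
    have fe: "(\<lambda>y. ((1 / (norm (grad v y))\<^sup>2) *\<^sub>R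
                  (laplacian v y *\<^sub>R grad v y - hessian v y *v grad v y)) $ i)
       = (\<lambda>y. (laplacian v y * pd i v y - (\<Sum>j\<in>UNIV. pd i (pd j v) y * pd j v y)) / (\<Sum>k\<in>UNIV. pd k v y * pd k v y))"
      by (rule ext) (rule comp_formula)
    show "pd i (\<lambda>y. ((1 / (norm (grad v y))\<^sup>2) *\<^sub>R
                  (laplacian v y *\<^sub>R grad v y - hessian v y *v grad v y)) $ i) x
        = (dM i * N - M i * dN i) / (N * N)"
      unfolding fe unfolding laplacian_def by (rule pd_eqI) (rule dD)
  qed
  define h where "h i = (\<Sum>j\<in>UNIV. H i j * g j)" for i
  have sym: "H i j = H j i" for i j
    unfolding H_def using clairaut[OF sm U x, of i j "[]"] by simp
  have tsym: "T i k k = T k k i" for i k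
    unfolding T_def by (rule third_sym[OF sm U x])
  have sdM: "(\<Sum>i\<in>UNIV. dM i) = L * L - (\<Sum>i\<in>UNIV. \<Sum>j\<in>UNIV. H i j * H i j)"
  proof -
    have t: "(\<Sum>i\<in>UNIV. (\<Sum>k\<in>UNIV. T i k k) * g i) = (\<Sum>i\<in>UNIV. \<Sum>j\<in>UNIV. T i i j * g j)"
    proof -
      have "(\<Sum>i\<in>UNIV. (\<Sum>k\<in>UNIV. T i k k) * g i) = (\<Sum>i\<in>UNIV. \<Sum>k\<in>UNIV. T k k i * g i)"
        unfolding sum_distrib_right by (intro sum.cong refl) (metis tsym)
      also have "\<dots> = (\<Sum>k\<in>UNIV. \<Sum>i\<in>UNIV. T k k i * g i)" by (rule sum.swap)
      finally show ?thesis .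
    qed
    have "(\<Sum>i\<in>UNIV. dM i) = (\<Sum>i\<in>UNIV. (\<Sum>k\<in>UNIV. T i k k) * g i) + (\<Sum>i\<in>UNIV. H i i) * L
        - (\<Sum>i\<in>UNIV. \<Sum>j\<in>UNIV. T i i j * g j) - (\<Sum>i\<in>UNIV. \<Sum>j\<in>UNIV. H i j * H i j)"
      unfolding dM_def by (simp add: sum.distrib sum_subtractf sum_distrib_right)
    then show ?thesis unfolding t L_def by simp
  qed
  have sMdN: "(\<Sum>i\<in>UNIV. M i * dN i) = 2 * (L * (\<Sum>i\<in>UNIV. g i * h i) - (\<Sum>i\<in>UNIV. h i * h i))"
  proof -
    have "M i * dN i = 2 * (L * (g i * h i) - h i * h i)" for i
    proof -
      have "dN i = 2 * h i" unfolding dN_def h_def by (simp add: sum_distrib_left mult_ac)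
      then show ?thesis unfolding M_def h_def by (simp add: algebra_simps)
    qed
    then show ?thesis by (simp add: sum_subtractf sum_distrib_left)
  qed
  have tang: "(\<Sum>k\<in>UNIV. \<Sum>l\<in>UNIV. H k l * w k * w l) \<le> 0" if "(\<Sum>i\<in>UNIV. w i * g i) = 0" for w
  proof -
    have "(\<Sum>k\<in>UNIV. \<Sum>l\<in>UNIV. pd k (pd l v) x * (\<chi> k. w k)$k * (\<chi> k. w k)$l) \<le> 0"
      by (rule qc_tangent[OF qc sm U x]) (use Npos that in \<open>simp_all add: N_def g_def\<close>)
    then show ?thesis by (simp add: H_def)
  qed
  have key: "0 \<le> N * (L * L - (\<Sum>i\<in>UNIV. \<Sum>j\<in>UNIV. H i j * H i j))
       - 2 * (L * (\<Sum>i\<in>UNIV. g i * h i) - (\<Sum>i\<in>UNIV. h i * h i))"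
    using key_ineq[of H g, OF sym _ tang] Npos unfolding N_def L_def h_def by simp
  have "(\<Sum>i\<in>UNIV. (dM i * N - M i * dN i) / (N * N)) = (N * (\<Sum>i\<in>UNIV. dM i) - (\<Sum>i\<in>UNIV. M i * dN i)) / (N * N)"
    by (simp add: sum_divide_distrib[symmetric] sum_subtractf sum_distrib_left mult_ac)
  also have "\<dots> \<ge> 0" unfolding sdM sMdN using key Npos by simp
  finally show ?thesis unfolding div_eq .
qed

end
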